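(* Let $(X,d)$ be a metric space, $x_0\in X$, $n\geq 1$, and let $e$ be the identity of $\pi_n(X,x_0)$. For all $a,b\in\pi_n(X,x_0)$, $\rho(ab,e)\leq\max\{\rho(a,e),\rho(b,e)\}$.
   Context: $\Omega^n(X,x_0)$ is the set of continuous maps $\alpha:[0,1]^n\to X$ with $\alpha(\partial[0,1]^n)=\{x_0\}$, with uniform metric $\mu(\alpha,\beta)=\sup_{t\in[0,1]^n}d(\alpha(t),\beta(t))$. For $a,b\in\pi_n(X,x_0)$, $\rho(a,b)=\inf\{\mu(\alpha,\beta)\mid\alpha\in a,\beta\in b\}$. *)

theory Defs
  imports "HOL-Analysis.Analysis"
begin

text \<open>The unit n-cube [0,1]^n, with points represented as functions nat \<Rightarrow> real
  whose coordinates i < n lie in [0,1] and whose coordinates i \<ge> n are 0.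
  The topology is the (product) topology on nat \<Rightarrow> real, which restricted to the
  cube is the usual topology of [0,1]^n.\<close>

definition cube :: "nat \<Rightarrow> (nat \<Rightarrow> real) set" where
  "cube n = {t. (\<forall>i<n. 0 \<le> t i \<and> t i \<le> 1) \<and> (\<forall>i\<ge>n. t i = 0)}"

definition cube_boundary :: "nat \<Rightarrow> (nat \<Rightarrow> real) set" where
  "cube_boundary n = {t \<in> cube n. \<exists>i<n. t i = 0 \<or> t i = 1}"

definition Omega :: "nat \<Rightarrow> 'a::metric_space set \<Rightarrow> 'a \<Rightarrow> ((nat \<Rightarrow> real) \<Rightarrow> 'a) set" where
  "Omega n X x0 = {\<alpha>. continuous_on (cube n) \<alpha> \<and> \<alpha> ` cube n \<subseteq> X
                       \<and> (\<forall>t\<in>cube_boundary n. \<alpha> t = x0)}"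

definition htpy_rel :: "nat \<Rightarrow> 'a::metric_space set \<Rightarrow> 'a
    \<Rightarrow> (((nat \<Rightarrow> real) \<Rightarrow> 'a) \<times> ((nat \<Rightarrow> real) \<Rightarrow> 'a)) set" where
  "htpy_rel n X x0 = {(\<alpha>, \<beta>). \<alpha> \<in> Omega n X x0 \<and> \<beta> \<in> Omega n X x0 \<and>
      homotopic_with_canon (\<lambda>h. \<forall>t\<in>cube_boundary n. h t = x0) (cube n) X \<alpha> \<beta>}"

definition pi_n :: "nat \<Rightarrow> 'a::metric_space set \<Rightarrow> 'a \<Rightarrow> ((nat \<Rightarrow> real) \<Rightarrow> 'a) set set" where
  "pi_n n X x0 = Omega n X x0 // htpy_rel n X x0"

definition concat_cube :: "((nat \<Rightarrow> real) \<Rightarrow> 'a) \<Rightarrow> ((nat \<Rightarrow> real) \<Rightarrow> 'a) \<Rightarrow> (nat \<Rightarrow> real) \<Rightarrow> 'a" where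
  "concat_cube \<alpha> \<beta> t = (if t 0 \<le> 1/2 then \<alpha> (t(0 := 2 * t 0)) else \<beta> (t(0 := 2 * t 0 - 1)))"

definition pi_mult :: "nat \<Rightarrow> 'a::metric_space set \<Rightarrow> 'a
    \<Rightarrow> ((nat \<Rightarrow> real) \<Rightarrow> 'a) set \<Rightarrow> ((nat \<Rightarrow> real) \<Rightarrow> 'a) set \<Rightarrow> ((nat \<Rightarrow> real) \<Rightarrow> 'a) set" where
  "pi_mult n X x0 a b = htpy_rel n X x0 `` {concat_cube (SOME \<alpha>. \<alpha> \<in> a) (SOME \<beta>. \<beta> \<in> b)}"

definition pi_one :: "nat \<Rightarrow> 'a::metric_space set \<Rightarrow> 'a \<Rightarrow> ((nat \<Rightarrow> real) \<Rightarrow> 'a) set" where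
  "pi_one n X x0 = htpy_rel n X x0 `` {\<lambda>t. x0}"

definition mu :: "nat \<Rightarrow> ((nat \<Rightarrow> real) \<Rightarrow> 'a::metric_space) \<Rightarrow> ((nat \<Rightarrow> real) \<Rightarrow> 'a) \<Rightarrow> real" where
  "mu n \<alpha> \<beta> = (SUP t\<in>cube n. dist (\<alpha> t) (\<beta> t))"

definition rho :: "nat \<Rightarrow> ((nat \<Rightarrow> real) \<Rightarrow> 'a::metric_space) set \<Rightarrow> ((nat \<Rightarrow> real) \<Rightarrow> 'a) set \<Rightarrow> real" where
  "rho n a b = Inf {mu n \<alpha> \<beta> | \<alpha> \<beta>. \<alpha> \<in> a \<and> \<beta> \<in> b}"

end

theory Submission
  imports Defs
begin

lemma htpy_canon_iff:
  "homotopic_with_canon P S T f g \<longleftrightarrow>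
   (\<exists>h. continuous_on ({0..1::real} \<times> S) h \<and> h ` ({0..1} \<times> S) \<subseteq> T \<and>
        (\<forall>x. h (0, x) = f x) \<and> (\<forall>x. h (1, x) = g x) \<and> (\<forall>t\<in>{0..1}. P (\<lambda>x. h (t, x))))"
  unfolding homotopic_with_def prod_topology_subtopology_eu continuous_map_subtopology_eu image_subset_iff_funcset by blast

lemma cont_coord: "continuous_on S (\<lambda>p. (snd p :: nat \<Rightarrow> real) i)"
  by (rule continuous_on_compose2[OF continuous_on_product_coordinates continuous_on_snd]) auto

lemma cont_upd: "continuous_on S (\<lambda>p. (fst p :: real, (snd p :: nat \<Rightarrow> real)(0 := 2 * snd p 0 - c)))"
proof (intro continuous_on_Pair continuous_on_fst continuous_on_id continuous_on_coordinatewise_then_product)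
  fix i show "continuous_on S (\<lambda>p. ((snd p)(0 := 2 * snd p 0 - c)) i)"
    by (cases "i = 0") (auto intro!: continuous_intros cont_coord)
qed

lemma cube_upd1: "t \<in> cube n \<Longrightarrow> n \<ge> 1 \<Longrightarrow> t 0 \<le> 1/2 \<Longrightarrow> t(0 := 2 * t 0) \<in> cube n"
  unfolding cube_def by auto
lemma cube_upd2: "t \<in> cube n \<Longrightarrow> n \<ge> 1 \<Longrightarrow> t 0 \<ge> 1/2 \<Longrightarrow> t(0 := 2 * t 0 - 1) \<in> cube n"
  unfolding cube_def by auto

lemma bd_upd1: assumes "t \<in> cube_boundary n" "n \<ge> 1" "t 0 \<le> 1/2" shows "t(0 := 2 * t 0) \<in> cube_boundary n"
proof -
  from assms obtain i where i: "i < n" "t i = 0 \<or> t i = 1" and t: "t \<in> cube n" unfolding cube_boundary_def by auto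
  have "(t(0 := 2 * t 0)) i = 0 \<or> (t(0 := 2 * t 0)) i = 1" using i assms(3) by (cases "i = 0") auto
  moreover have "t(0 := 2 * t 0) \<in> cube n" using cube_upd1[OF t assms(2,3)] by auto
  ultimately show ?thesis using i unfolding cube_boundary_def by blast
qed
lemma bd_upd2: assumes "t \<in> cube_boundary n" "n \<ge> 1" "\<not> t 0 \<le> 1/2" shows "t(0 := 2 * t 0 - 1) \<in> cube_boundary n"
proof -
  from assms obtain i where i: "i < n" "t i = 0 \<or> t i = 1" and t: "t \<in> cube n" unfolding cube_boundary_def by auto
  have "(t(0 := 2 * t 0 - 1)) i = 0 \<or> (t(0 := 2 * t 0 - 1)) i = 1" using i assms(3) by (cases "i = 0") auto
  moreover have "t(0 := 2 * t 0 - 1) \<in> cube n" using cube_upd2[OF t assms(2)] assms(3) by auto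
  ultimately show ?thesis using i unfolding cube_boundary_def by blast
qed
lemma bd_mid1: "t \<in> cube n \<Longrightarrow> n \<ge> 1 \<Longrightarrow> t 0 = 1/2 \<Longrightarrow> t(0 := 2 * t 0) \<in> cube_boundary n"
  unfolding cube_boundary_def using cube_upd1[of t n] by auto
lemma bd_mid2: "t \<in> cube n \<Longrightarrow> n \<ge> 1 \<Longrightarrow> t 0 = 1/2 \<Longrightarrow> t(0 := 2 * t 0 - 1) \<in> cube_boundary n"
  unfolding cube_boundary_def using cube_upd2[of t n] by auto

lemma concat_htpy:
  fixes x0 :: "'a::metric_space"
  assumes n: "n \<ge> 1"
    and A: "homotopic_with_canon (\<lambda>h. \<forall>t\<in>cube_boundary n. h t = x0) (cube n) X \<alpha> \<alpha>'"
    and B: "homotopic_with_canon (\<lambda>h. \<forall>t\<in>cube_boundary n. h t = x0) (cube n) X \<beta> \<beta>'"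
  shows "homotopic_with_canon (\<lambda>h. \<forall>t\<in>cube_boundary n. h t = x0) (cube n) X
           (concat_cube \<alpha> \<beta>) (concat_cube \<alpha>' \<beta>')"
proof -
  obtain H1 where H1c: "continuous_on ({0..1::real} \<times> cube n) H1" and H1i: "H1 ` ({0..1} \<times> cube n) \<subseteq> X"
    and H10: "\<forall>x. H1 (0, x) = \<alpha> x" and H11: "\<forall>x. H1 (1, x) = \<alpha>' x"
    and H1P: "\<forall>s\<in>{0..1}. \<forall>t\<in>cube_boundary n. H1 (s, t) = x0"
    using A unfolding htpy_canon_iff by blast
  obtain H2 where H2c: "continuous_on ({0..1::real} \<times> cube n) H2" and H2i: "H2 ` ({0..1} \<times> cube n) \<subseteq> X"
    and H20: "\<forall>x. H2 (0, x) = \<beta> x" and H21: "\<forall>x. H2 (1, x) = \<beta>' x"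
    and H2P: "\<forall>s\<in>{0..1}. \<forall>t\<in>cube_boundary n. H2 (s, t) = x0"
    using B unfolding htpy_canon_iff by blast
  define D where "D = {0..1::real} \<times> cube n"
  define K where "K = (\<lambda>p::real \<times> (nat \<Rightarrow> real). if snd p 0 \<le> 1/2 then H1 (fst p, (snd p)(0 := 2 * snd p 0))
                        else H2 (fst p, (snd p)(0 := 2 * snd p 0 - 1)))"
  have c1: "continuous_on {x \<in> D. snd x 0 \<le> 1/2} (\<lambda>p. H1 (fst p, (snd p)(0 := 2 * snd p 0)))"
    by (rule continuous_on_compose2[OF H1c cont_upd[of _ 0, simplified]])
       (auto simp: D_def intro!: cube_upd1 n)
  have c2: "continuous_on {x \<in> D. 1/2 \<le> snd x 0} (\<lambda>p. H2 (fst p, (snd p)(0 := 2 * snd p 0 - 1)))"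
    by (rule continuous_on_compose2[OF H2c cont_upd[of _ 1]])
       (auto simp: D_def intro!: cube_upd2 n)
  have "continuous_on D K"
    unfolding K_def
  proof (rule continuous_on_cases_le[OF c1 c2 cont_coord])
    fix x assume "x \<in> D" "snd x 0 = 1/2"
    then show "H1 (fst x, (snd x)(0 := 2 * snd x 0)) = H2 (fst x, (snd x)(0 := 2 * snd x 0 - 1))"
      using H1P H2P bd_mid1[OF _ n] bd_mid2[OF _ n] by (auto simp: D_def)
  qed
  moreover have "K ` D \<subseteq> X"
    using H1i H2i cube_upd1[OF _ n] cube_upd2[OF _ n] by (force simp: D_def K_def)
  moreover have "\<forall>x. K (0, x) = concat_cube \<alpha> \<beta> x"
    using H10 H20 by (simp add: K_def concat_cube_def)
  moreover have "\<forall>x. K (1, x) = concat_cube \<alpha>' \<beta>' x"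
    using H11 H21 by (simp add: K_def concat_cube_def)
  moreover have "\<forall>s\<in>{0..1}. \<forall>t\<in>cube_boundary n. K (s, t) = x0"
    using H1P H2P bd_upd1[OF _ n] bd_upd2[OF _ n] by (simp add: K_def)
  ultimately show ?thesis unfolding htpy_canon_iff D_def by blast
qed


lemma compact_cube: "compact (cube n)"
proof -
  have eq: "cube n = PiE UNIV (\<lambda>i. if i < n then {0..1::real} else {0})"
    unfolding cube_def
  proof (intro set_eqI iffI)
    fix t :: "nat \<Rightarrow> real" assume "t \<in> PiE UNIV (\<lambda>i. if i < n then {0..1::real} else {0})"
    then have "\<And>i. t i \<in> (if i < n then {0..1::real} else {0})" by (auto simp: PiE_iff)
    then have "\<And>i. (i < n \<longrightarrow> 0 \<le> t i \<and> t i \<le> 1) \<and> (i \<ge> n \<longrightarrow> t i = 0)"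
    proof -
      fix i assume H: "\<And>i. t i \<in> (if i < n then {0..1::real} else {0})"
      show "(i < n \<longrightarrow> 0 \<le> t i \<and> t i \<le> 1) \<and> (i \<ge> n \<longrightarrow> t i = 0)"
        using H[of i] by (cases "i < n") auto
    qed
    then show "t \<in> {t. (\<forall>i<n. 0 \<le> t i \<and> t i \<le> 1) \<and> (\<forall>i\<ge>n. t i = 0)}"
      by simp
  qed (auto simp: PiE_iff)
  have "compactin (product_topology (\<lambda>i. euclidean) UNIV) (PiE UNIV (\<lambda>i. if i < n then {0..1::real} else {0}))"
    by (subst compactin_PiE) auto
  then show ?thesis unfolding eq euclidean_product_topology by simp
qed

lemma cube_ne: "(\<lambda>_. 0) \<in> cube n"
  unfolding cube_def by auto

lemma mu_bdd:
  assumes "continuous_on (cube n) \<alpha>" "continuous_on (cube n) \<beta>"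
  shows "bdd_above ((\<lambda>t. dist (\<alpha> t) (\<beta> t)) ` cube n)"
proof -
  have "compact ((\<lambda>t. dist (\<alpha> t) (\<beta> t)) ` cube n)"
    by (intro compact_continuous_image continuous_on_dist assms compact_cube)
  then show ?thesis by (intro bounded_imp_bdd_above compact_imp_bounded)
qed

lemma mu_upper:
  assumes "continuous_on (cube n) \<alpha>" "continuous_on (cube n) \<beta>" "t \<in> cube n"
  shows "dist (\<alpha> t) (\<beta> t) \<le> mu n \<alpha> \<beta>"
  unfolding mu_def by (rule cSUP_upper[OF assms(3) mu_bdd[OF assms(1,2)]])

lemma mu_nonneg:
  assumes "continuous_on (cube n) \<alpha>" "continuous_on (cube n) \<beta>"
  shows "0 \<le> mu n \<alpha> \<beta>"
  by (rule order_trans[OF zero_le_dist mu_upper[OF assms cube_ne]])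

lemma mu_concat:
  assumes n: "n \<ge> 1" and c: "continuous_on (cube n) \<alpha>" "continuous_on (cube n) \<gamma>"
     "continuous_on (cube n) \<beta>" "continuous_on (cube n) \<delta>"
  shows "mu n (concat_cube \<alpha> \<beta>) (concat_cube \<gamma> \<delta>) \<le> max (mu n \<alpha> \<gamma>) (mu n \<beta> \<delta>)"
  unfolding mu_def[of n "concat_cube \<alpha> \<beta>"]
proof (rule cSUP_least)
  show "cube n \<noteq> {}" using cube_ne by blast
  fix t assume t: "t \<in> cube n"
  show "dist (concat_cube \<alpha> \<beta> t) (concat_cube \<gamma> \<delta> t) \<le> max (mu n \<alpha> \<gamma>) (mu n \<beta> \<delta>)"
  proof (cases "t 0 \<le> 1/2")
    case True
    then show ?thesis using mu_upper[OF c(1,2) cube_upd1[OF t n True]] by (simp add: concat_cube_def)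
  next
    case False
    then show ?thesis using mu_upper[OF c(3,4) cube_upd2[OF t n]] by (simp add: concat_cube_def)
  qed
qed

lemma htpy_in_rel:
  assumes "homotopic_with_canon (\<lambda>h. \<forall>t\<in>cube_boundary n. h t = x0) (cube n) X f g"
  shows "(f, g) \<in> htpy_rel n X x0"
  using assms homotopic_with_imp_continuous[OF assms] homotopic_with_imp_subset1[OF assms]
    homotopic_with_imp_subset2[OF assms] homotopic_with_imp_property[OF assms]
  unfolding htpy_rel_def Omega_def by auto

lemma rel_htpy:
  "(f, g) \<in> htpy_rel n X x0 \<Longrightarrow> homotopic_with_canon (\<lambda>h. \<forall>t\<in>cube_boundary n. h t = x0) (cube n) X f g"
  unfolding htpy_rel_def by auto

lemma rel_Omega: "(f, g) \<in> htpy_rel n X x0 \<Longrightarrow> f \<in> Omega n X x0 \<and> g \<in> Omega n X x0"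
  unfolding htpy_rel_def by auto

lemma rel_refl: "f \<in> Omega n X x0 \<Longrightarrow> (f, f) \<in> htpy_rel n X x0"
  unfolding htpy_rel_def Omega_def
  by (auto simp: continuous_map_subtopology_eu image_subset_iff_funcset)

lemma rel_sym: "(f, g) \<in> htpy_rel n X x0 \<Longrightarrow> (g, f) \<in> htpy_rel n X x0"
  by (rule htpy_in_rel[OF homotopic_with_symD[OF rel_htpy]])

lemma rel_trans: "(f, g) \<in> htpy_rel n X x0 \<Longrightarrow> (g, h) \<in> htpy_rel n X x0 \<Longrightarrow> (f, h) \<in> htpy_rel n X x0"
  by (rule htpy_in_rel[OF homotopic_with_trans[OF rel_htpy rel_htpy]])

lemma class_rel:
  assumes "c \<in> pi_n n X x0" "f \<in> c" "g \<in> c"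
  shows "(f, g) \<in> htpy_rel n X x0"
proof -
  obtain x where "c = htpy_rel n X x0 `` {x}" using assms(1) unfolding pi_n_def by (auto elim: quotientE)
  then have h1: "(x, f) \<in> htpy_rel n X x0" and h2: "(x, g) \<in> htpy_rel n X x0" using assms(2,3) by auto
  show ?thesis by (rule rel_trans[OF rel_sym[OF h1] h2])
qed

lemma class_Omega: "c \<in> pi_n n X x0 \<Longrightarrow> f \<in> c \<Longrightarrow> f \<in> Omega n X x0"
  using class_rel rel_Omega by blast

lemma class_some: "c \<in> pi_n n X x0 \<Longrightarrow> (SOME f. f \<in> c) \<in> c"
proof -
  assume "c \<in> pi_n n X x0"
  then obtain x where "x \<in> Omega n X x0" "c = htpy_rel n X x0 `` {x}" unfolding pi_n_def by (auto elim: quotientE)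
  then have "x \<in> c" using rel_refl by blast
  then show ?thesis by (rule someI[of "\<lambda>f. f \<in> c"])
qed

lemma Omega_cont: "f \<in> Omega n X x0 \<Longrightarrow> continuous_on (cube n) f"
  unfolding Omega_def by auto

lemma const_Omega: "x0 \<in> X \<Longrightarrow> (\<lambda>t. x0) \<in> Omega n X x0"
  unfolding Omega_def by auto

theorem lemma4p4:
  fixes X :: "'a::metric_space set" and x0 :: 'a and n :: nat
  assumes "x0 \<in> X" and "n \<ge> 1"
    and "a \<in> pi_n n X x0" and "b \<in> pi_n n X x0"
  shows "rho n (pi_mult n X x0 a b) (pi_one n X x0)
           \<le> max (rho n a (pi_one n X x0)) (rho n b (pi_one n X x0))"
proof -
  let ?R = "htpy_rel n X x0"
  let ?e = "pi_one n X x0"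
  let ?c = "\<lambda>t::nat\<Rightarrow>real. x0"
  have ce: "?c \<in> ?e" unfolding pi_one_def using rel_refl[OF const_Omega[OF assms(1)]] by blast
  have eO: "f \<in> Omega n X x0" if "f \<in> ?e" for f using that rel_Omega unfolding pi_one_def by blast
  have abO: "f \<in> Omega n X x0" if "f \<in> pi_mult n X x0 a b" for f using that rel_Omega unfolding pi_mult_def by blast
  define S where "S = (\<lambda>c. {mu n \<alpha> \<beta> | \<alpha> \<beta>. \<alpha> \<in> c \<and> \<beta> \<in> ?e})"
  have rhoS: "rho n c ?e = Inf (S c)" for c unfolding rho_def S_def by simp
  have Sne: "S c \<noteq> {}" if "c \<in> pi_n n X x0" for c
    using class_some[OF that] ce unfolding S_def by blast
  have bdd: "bdd_below (S c)" if "\<And>f. f \<in> c \<Longrightarrow> f \<in> Omega n X x0" for c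
    by (rule bdd_belowI[of _ 0]) (auto simp: S_def intro!: mu_nonneg Omega_cont that eO)
  have mem_ab: "concat_cube \<alpha> \<beta> \<in> pi_mult n X x0 a b" if "\<alpha> \<in> a" "\<beta> \<in> b" for \<alpha> \<beta>
  proof -
    have h1: "(SOME f. f \<in> a, \<alpha>) \<in> ?R" by (rule class_rel[OF assms(3) class_some[OF assms(3)] that(1)])
    have h2: "(SOME f. f \<in> b, \<beta>) \<in> ?R" by (rule class_rel[OF assms(4) class_some[OF assms(4)] that(2)])
    have "(concat_cube (SOME f. f \<in> a) (SOME f. f \<in> b), concat_cube \<alpha> \<beta>) \<in> ?R"
      by (rule htpy_in_rel[OF concat_htpy[OF assms(2) rel_htpy[OF h1] rel_htpy[OF h2]]])
    then show ?thesis unfolding pi_mult_def by simp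
  qed
  have mem_e: "concat_cube \<gamma> \<delta> \<in> ?e" if "\<gamma> \<in> ?e" "\<delta> \<in> ?e" for \<gamma> \<delta>
  proof -
    have h1: "(?c, \<gamma>) \<in> ?R" and h2: "(?c, \<delta>) \<in> ?R" using that unfolding pi_one_def by auto
    have "(concat_cube ?c ?c, concat_cube \<gamma> \<delta>) \<in> ?R"
      by (rule htpy_in_rel[OF concat_htpy[OF assms(2) rel_htpy[OF h1] rel_htpy[OF h2]]])
    moreover have "concat_cube ?c ?c = ?c" by (auto simp: concat_cube_def)
    ultimately show ?thesis unfolding pi_one_def by auto
  qed
  show ?thesis
  proof (rule field_le_epsilon)
    fix \<epsilon> :: real assume "\<epsilon> > 0"
    have "Inf (S a) < rho n a ?e + \<epsilon>" using \<open>\<epsilon> > 0\<close> rhoS by simp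
    then obtain m1 where "m1 \<in> S a" "m1 < rho n a ?e + \<epsilon>" using cInf_lessD[OF Sne[OF assms(3)]] by blast
    then obtain \<alpha> \<gamma> where ag: "\<alpha> \<in> a" "\<gamma> \<in> ?e" "mu n \<alpha> \<gamma> < rho n a ?e + \<epsilon>" unfolding S_def by blast
    have "Inf (S b) < rho n b ?e + \<epsilon>" using \<open>\<epsilon> > 0\<close> rhoS by simp
    then obtain m2 where "m2 \<in> S b" "m2 < rho n b ?e + \<epsilon>" using cInf_lessD[OF Sne[OF assms(4)]] by blast
    then obtain \<beta> \<delta> where bd: "\<beta> \<in> b" "\<delta> \<in> ?e" "mu n \<beta> \<delta> < rho n b ?e + \<epsilon>" unfolding S_def by blast
    have "mu n (concat_cube \<alpha> \<beta>) (concat_cube \<gamma> \<delta>) \<in> S (pi_mult n X x0 a b)"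
      unfolding S_def using mem_ab[OF ag(1) bd(1)] mem_e[OF ag(2) bd(2)] by blast
    then have "rho n (pi_mult n X x0 a b) ?e \<le> mu n (concat_cube \<alpha> \<beta>) (concat_cube \<gamma> \<delta>)"
      unfolding rhoS using bdd[OF abO] by (rule cInf_lower)
    also have "\<dots> \<le> max (mu n \<alpha> \<gamma>) (mu n \<beta> \<delta>)"
      by (rule mu_concat[OF assms(2) Omega_cont[OF class_Omega[OF assms(3) ag(1)]] Omega_cont[OF eO[OF ag(2)]]
            Omega_cont[OF class_Omega[OF assms(4) bd(1)]] Omega_cont[OF eO[OF bd(2)]]])
    also have "\<dots> \<le> max (rho n a ?e) (rho n b ?e) + \<epsilon>" using ag(3) bd(3) by linarith
    finally show "rho n (pi_mult n X x0 a b) ?e \<le> max (rho n a ?e) (rho n b ?e) + \<epsilon>" .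
  qed
qed

end
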